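(* Let $n\ge 4$ and let $L$ be an $n$-bow, i.e. a generic length vector satisfying the strict triangle inequality such that $\{n,i\}$ is long for every $i=1,\dots,n-1$. Then any two vertices of $\Gamma(L)$ are connected by a path in $\Gamma(L)$ of length at most $3$.
   Context: Let $n\ge 4$ and $L=(l_1,\dots,l_n)$ be positive reals with $l_i<\sum_{j\ne i}l_j$ for every $i$ (strict triangle inequality), and generic: there is no $J\subseteq[n]$ with $\sum_{i\in J}l_i=\sum_{i\notin J}l_i$. Here $[n]=\{1,\dots,n\}$ and $|L|=\sum_{i=1}^n l_i$. A set $I\subseteq[n]$ is short if $\sum_{i\in I}l_i<|L|/2$ and long otherwise. A cyclically ordered partition of $[n]$ into $k$ parts is a sequence $(A_1,\dots,A_k)$ of pairwise disjoint nonempty sets with union $[n]$, considered up to cyclic shifts $(A_1,\dots,A_k)\sim(A_2,\dots,A_k,A_1)$; there is no ordering inside a part. It is admissible if every part is short. The graph $\Gamma(L)$ has as vertices the admissible cyclically ordered partitions of $[n]$ into 3 parts, written $(I,J,K)$, and as edges the admissible cyclically ordered partitions into 4 parts $(A,B,C,D)$; such an edge is incident to each of the partitions $(A\cup B,C,D)$, $(A,B\cup C,D)$, $(A,B,C\cup D)$, $(D\cup A,B,C)$ that is admissible. Equivalently, two vertices are adjacent iff one is obtained from the other by moving a nonempty proper subset of one part into another part. The length of a path is its number of edges. *)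

theory Defs
  imports Complex_Main
begin

text \<open>Length vectors are functions L :: nat => real, relevant on the index set {1..n}.\<close>

definition total_len :: "nat \<Rightarrow> (nat \<Rightarrow> real) \<Rightarrow> real" where
  "total_len n L = (\<Sum>i\<in>{1..n}. L i)"

definition short :: "nat \<Rightarrow> (nat \<Rightarrow> real) \<Rightarrow> nat set \<Rightarrow> bool" where
  "short n L I \<longleftrightarrow> (\<Sum>i\<in>I. L i) < total_len n L / 2"

definition long :: "nat \<Rightarrow> (nat \<Rightarrow> real) \<Rightarrow> nat set \<Rightarrow> bool" where
  "long n L I \<longleftrightarrow> \<not> short n L I"

definition length_vector :: "nat \<Rightarrow> (nat \<Rightarrow> real) \<Rightarrow> bool" where
  "length_vector n L \<longleftrightarrow>
     (\<forall>i\<in>{1..n}. 0 < L i) \<and>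
     (\<forall>i\<in>{1..n}. L i < (\<Sum>j\<in>{1..n} - {i}. L j))"

definition generic :: "nat \<Rightarrow> (nat \<Rightarrow> real) \<Rightarrow> bool" where
  "generic n L \<longleftrightarrow>
     (\<forall>J. J \<subseteq> {1..n} \<longrightarrow> (\<Sum>i\<in>J. L i) \<noteq> (\<Sum>i\<in>{1..n} - J. L i))"

definition is_bow :: "nat \<Rightarrow> (nat \<Rightarrow> real) \<Rightarrow> bool" where
  "is_bow n L \<longleftrightarrow> length_vector n L \<and> generic n L \<and>
     (\<forall>i\<in>{1..n-1}. long n L {n, i})"

text \<open>Cyclically ordered partitions into 3 parts, represented by a triple
  (one representative of the cyclic class).\<close>

definition adm3 :: "nat \<Rightarrow> (nat \<Rightarrow> real) \<Rightarrow> nat set \<times> nat set \<times> nat set \<Rightarrow> bool" where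
  "adm3 n L v = (case v of (I, J, K) \<Rightarrow>
      I \<noteq> {} \<and> J \<noteq> {} \<and> K \<noteq> {} \<and>
      I \<inter> J = {} \<and> I \<inter> K = {} \<and> J \<inter> K = {} \<and>
      I \<union> J \<union> K = {1..n} \<and>
      short n L I \<and> short n L J \<and> short n L K)"

definition adm4 :: "nat \<Rightarrow> (nat \<Rightarrow> real) \<Rightarrow> nat set \<Rightarrow> nat set \<Rightarrow> nat set \<Rightarrow> nat set \<Rightarrow> bool" where
  "adm4 n L A B C D \<longleftrightarrow>
      A \<noteq> {} \<and> B \<noteq> {} \<and> C \<noteq> {} \<and> D \<noteq> {} \<and>
      A \<inter> B = {} \<and> A \<inter> C = {} \<and> A \<inter> D = {} \<and>
      B \<inter> C = {} \<and> B \<inter> D = {} \<and> C \<inter> D = {} \<and>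
      A \<union> B \<union> C \<union> D = {1..n} \<and>
      short n L A \<and> short n L B \<and> short n L C \<and> short n L D"

definition cyc_eq :: "nat set \<times> nat set \<times> nat set \<Rightarrow> nat set \<times> nat set \<times> nat set \<Rightarrow> bool" where
  "cyc_eq v w = (case w of (I, J, K) \<Rightarrow> v = (I, J, K) \<or> v = (J, K, I) \<or> v = (K, I, J))"

text \<open>The vertex v is incident to the edge (A,B,C,D): it is (up to cyclic shift)
  one of the four merges of cyclically adjacent parts.\<close>
definition incident :: "nat set \<times> nat set \<times> nat set \<Rightarrow> nat set \<Rightarrow> nat set \<Rightarrow> nat set \<Rightarrow> nat set \<Rightarrow> bool" where
  "incident v A B C D \<longleftrightarrow>
     cyc_eq v (A \<union> B, C, D) \<or> cyc_eq v (A, B \<union> C, D) \<or>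
     cyc_eq v (A, B, C \<union> D) \<or> cyc_eq v (D \<union> A, B, C)"

definition gamma_adj :: "nat \<Rightarrow> (nat \<Rightarrow> real) \<Rightarrow> nat set \<times> nat set \<times> nat set \<Rightarrow> nat set \<times> nat set \<times> nat set \<Rightarrow> bool" where
  "gamma_adj n L v w \<longleftrightarrow> adm3 n L v \<and> adm3 n L w \<and> \<not> cyc_eq v w \<and>
     (\<exists>A B C D. adm4 n L A B C D \<and> incident v A B C D \<and> incident w A B C D)"

definition gamma_path_le :: "nat \<Rightarrow> (nat \<Rightarrow> real) \<Rightarrow> nat \<Rightarrow> nat set \<times> nat set \<times> nat set \<Rightarrow> nat set \<times> nat set \<times> nat set \<Rightarrow> bool" where
  "gamma_path_le n L k v w \<longleftrightarrow>
     (\<exists>ps. ps \<noteq> [] \<and> hd ps = v \<and> last ps = w \<and> length ps \<le> k + 1 \<and>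
        (\<forall>p\<in>set ps. adm3 n L p) \<and>
        (\<forall>i. i + 1 < length ps \<longrightarrow> gamma_adj n L (ps ! i) (ps ! (i + 1))))"

end

theory Submission
  imports Defs
begin

definition Pv :: "nat \<Rightarrow> nat set \<Rightarrow> nat set \<times> nat set \<times> nat set" where
  "Pv n J = ({n}, J, {1..n-1} - J)"

definition good :: "nat \<Rightarrow> nat set \<Rightarrow> bool" where
  "good n J \<longleftrightarrow> J \<subseteq> {1..n-1} \<and> J \<noteq> {} \<and> J \<noteq> {1..n-1}"

lemma pair_long:
  assumes "is_bow n L" "i \<in> {1..n-1}"
  shows "total_len n L / 2 \<le> L n + L i" "i \<noteq> n" "n \<ge> 2"
proof -
  have "long n L {n,i}" using assms unfolding is_bow_def by auto
  moreover have "i \<noteq> n" "n \<ge> 2" using assms(2) by auto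
  ultimately show "total_len n L / 2 \<le> L n + L i" "i \<noteq> n" "n \<ge> 2"
    unfolding long_def short_def by auto
qed

lemma sum_ge_pair:
  assumes "is_bow n L" "i \<in> {1..n-1}" "{n,i} \<subseteq> X" "X \<subseteq> {1..n}"
  shows "total_len n L / 2 \<le> sum L X"
proof -
  have pos: "\<forall>j\<in>{1..n}. 0 < L j" using assms(1) unfolding is_bow_def length_vector_def by auto
  have fin: "finite X" using assms(4) finite_subset by blast
  have "sum L {n,i} \<le> sum L X"
    by (rule sum_mono2[OF fin assms(3)]) (use pos assms(4) in fastforce)
  moreover have "sum L {n,i} = L n + L i" using pair_long[OF assms(1,2)] by simp
  ultimately show ?thesis using pair_long[OF assms(1,2)] by linarith
qed

lemma short_sub:
  assumes "is_bow n L" "S \<subseteq> {1..n-1}" "S \<noteq> {1..n-1}"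
  shows "short n L S"
proof -
  obtain i where i: "i \<in> {1..n-1}" "i \<notin> S" using assms(2,3) by blast
  have n2: "n \<ge> 2" "i \<noteq> n" using pair_long[OF assms(1) i(1)] by auto
  have "{1..n-1} \<subseteq> {1..(n::nat)}" by auto
  then have S: "S \<subseteq> {1..n}" using assms(2) by (rule_tac subset_trans) auto
  have "{n,i} \<subseteq> {1..n} - S" using i n2 assms(2) by auto
  then have a: "total_len n L / 2 \<le> sum L ({1..n} - S)"
    using sum_ge_pair[OF assms(1) i(1)] by blast
  have b: "sum L S + sum L ({1..n} - S) = total_len n L"
  proof -
    have "sum L {1..n} = sum L ({1..n} - S) + sum L S" by (rule sum.subset_diff[OF S]) simp
    then show ?thesis unfolding total_len_def by linarith
  qed
  have "sum L S \<noteq> sum L ({1..n} - S)" using assms(1) S unfolding is_bow_def generic_def by blast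
  then show ?thesis unfolding short_def using a b by linarith
qed

lemma short_n:
  assumes "is_bow n L" "n \<ge> 1"
  shows "short n L {n}"
proof -
  have "L n < sum L ({1..n} - {n})" using assms unfolding is_bow_def length_vector_def by auto
  moreover have "sum L {1..n} = L n + sum L ({1..n} - {n})"
    using assms(2) by (subst sum.remove[of _ n]) auto
  ultimately show ?thesis unfolding short_def total_len_def by simp
qed

lemma part_n:
  assumes "is_bow n L" "X \<subseteq> {1..n}" "n \<in> X" "short n L X"
  shows "X = {n}"
proof (rule ccontr)
  assume "X \<noteq> {n}"
  then obtain i where i: "i \<in> X" "i \<noteq> n" using assms(3) by blast
  have "i \<in> {1..n}" using assms(2) i by blast
  then have i1: "i \<in> {1..n-1}" using i by auto
  have "total_len n L / 2 \<le> sum L X" using sum_ge_pair[OF assms(1) i1] i assms by blast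
  then show False using assms(4) unfolding short_def by simp
qed

lemma cyc_eq_sym: "cyc_eq v u \<Longrightarrow> cyc_eq u v"
  unfolding cyc_eq_def by (cases v; cases u) auto

lemma cyc_eq_trans: "cyc_eq v u \<Longrightarrow> cyc_eq u x \<Longrightarrow> cyc_eq v x"
  unfolding cyc_eq_def by (cases v; cases u; cases x) auto

lemma adm3_Pv:
  assumes "is_bow n L" "good n J"
  shows "adm3 n L (Pv n J)"
proof -
  have n1: "n \<ge> 2" using assms(2) unfolding good_def by auto
  have "J \<union> ({1..n-1} - J) = {1..n-1}" using assms(2) unfolding good_def by blast
  moreover have "{n} \<union> {1..n-1} = {1..n}" using n1 by auto
  ultimately have "{n} \<union> J \<union> ({1..n-1} - J) = {1..n}" by blast
  moreover have "short n L J" using short_sub[OF assms(1)] assms(2) unfolding good_def by auto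
  moreover have "short n L ({1..n-1} - J)" using short_sub[OF assms(1)] assms(2) unfolding good_def by auto
  moreover have "short n L {n}" using short_n[OF assms(1)] n1 by auto
  moreover have "{1..n-1} - J \<noteq> {}" using assms(2) unfolding good_def by auto
  moreover have "n \<notin> {1..n-1}" by auto
  then have "{n} \<inter> J = {}" "{n} \<inter> ({1..n-1} - J) = {}" using assms(2) unfolding good_def by auto
  moreover have "J \<inter> ({1..n-1} - J) = {}" "{n} \<noteq> {}" "J \<noteq> {}" using assms(2) unfolding good_def by auto
  ultimately show ?thesis unfolding adm3_def Pv_def prod.case by blast
qed

lemma canon_aux:
  assumes "A \<union> B \<union> C = U" "A \<inter> B = {}" "A \<inter> C = {}" "B \<inter> C = {}" "A = {x}" "U - {x} = M"
    "B \<noteq> {}" "C \<noteq> {}"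
  shows "C = M - B \<and> B \<subseteq> M \<and> B \<noteq> {} \<and> B \<noteq> M"
  using assms by blast

lemma Pv_M: "M = {1..n-1} \<Longrightarrow> Pv n J = ({n}, J, M - J)"
  unfolding Pv_def by simp

lemma good_M: "M = {1..n-1} \<Longrightarrow> good n J \<longleftrightarrow> J \<subseteq> M \<and> J \<noteq> {} \<and> J \<noteq> M"
  unfolding good_def by simp

lemma canon:
  assumes "is_bow n L" "adm3 n L v" "n \<ge> 4"
  shows "\<exists>J. good n J \<and> cyc_eq v (Pv n J)"
proof -
  define M where "M = {1..n-1}"
  obtain I J K where v: "v = (I,J,K)" by (cases v) auto
  have a: "I \<noteq> {}" "J \<noteq> {}" "K \<noteq> {}" "I \<inter> J = {}" "I \<inter> K = {}" "J \<inter> K = {}"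
      "I \<union> J \<union> K = {1..n}" "short n L I" "short n L J" "short n L K"
    using assms(2) unfolding v adm3_def prod.case by blast+
  have nn: "n \<in> {1..n}" using assms(3) by simp
  have nin: "n \<in> I \<or> n \<in> J \<or> n \<in> K" using a(7) nn by blast
  have m: "{1..n} - {n} = M" unfolding M_def using assms(3) by auto
  have sI: "I \<subseteq> {1..n}" "J \<subseteq> {1..n}" "K \<subseteq> {1..n}" using a(7) by blast+
  note gd = good_M[OF M_def]
  note pv = Pv_M[OF M_def]
  show ?thesis
  proof -
    { assume "n \<in> I"
      then have I: "I = {n}" using part_n[OF assms(1) sI(1)] a by blast
      have h: "K = M - J \<and> J \<subseteq> M \<and> J \<noteq> {} \<and> J \<noteq> M"
        by (rule canon_aux[OF a(7) a(4) a(5) a(6) I m a(2) a(3)])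
      then have "good n J" using gd by blast
      moreover have "cyc_eq v (Pv n J)" unfolding v cyc_eq_def pv prod.case using I h by simp
      ultimately have ?thesis by blast }
    moreover
    { assume "n \<in> J"
      then have J: "J = {n}" using part_n[OF assms(1) sI(2)] a by blast
      have u: "J \<union> K \<union> I = {1..n}" "J \<inter> K = {}" "J \<inter> I = {}" "K \<inter> I = {}" using a by blast+
      have h: "I = M - K \<and> K \<subseteq> M \<and> K \<noteq> {} \<and> K \<noteq> M"
        by (rule canon_aux[OF u J m a(3) a(1)])
      then have "good n K" using gd by blast
      moreover have "cyc_eq v (Pv n K)" unfolding v cyc_eq_def pv prod.case using J h by simp
      ultimately have ?thesis by blast }
    moreover
    { assume "n \<in> K"
      then have K: "K = {n}" using part_n[OF assms(1) sI(3)] a by blast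
      have u: "K \<union> I \<union> J = {1..n}" "K \<inter> I = {}" "K \<inter> J = {}" "I \<inter> J = {}" using a by blast+
      have h: "J = M - I \<and> I \<subseteq> M \<and> I \<noteq> {} \<and> I \<noteq> M"
        by (rule canon_aux[OF u K m a(1) a(2)])
      then have "good n I" using gd by blast
      moreover have "cyc_eq v (Pv n I)" unfolding v cyc_eq_def pv prod.case using K h by simp
      ultimately have ?thesis by blast }
    ultimately show ?thesis using nin by blast
  qed
qed

lemma adj_sub:
  assumes "is_bow n L" "good n J" "good n K" "J \<subset> K"
  shows "gamma_adj n L (Pv n J) (Pv n K) \<and> gamma_adj n L (Pv n K) (Pv n J)"
proof -
  define M where "M = {1..n-1}"
  note gd = good_M[OF M_def]
  note pv = Pv_M[OF M_def]
  have ss: "\<And>S. S \<subseteq> M \<Longrightarrow> S \<noteq> M \<Longrightarrow> short n L S" using short_sub[OF assms(1)] unfolding M_def by blast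
  have n1: "n \<ge> 2" using assms(2) unfolding good_def by auto
  have nm: "n \<notin> M" unfolding M_def by auto
  have JK: "J \<subseteq> K" "K \<subseteq> M" "J \<noteq> {}" "K \<noteq> M" "K - J \<noteq> {}" "J \<noteq> K"
    using assms(2,3,4) unfolding gd by blast+
  have s1: "short n L (K - J)" using ss[of "K - J"] JK by blast
  have s2: "short n L (M - K)" using ss[of "M - K"] JK by blast
  have s3: "short n L J" using ss[of J] JK by blast
  have s4: "short n L {n}" using short_n[OF assms(1)] n1 by auto
  have u: "{n} \<union> M = {1..n}" unfolding M_def using n1 by auto
  have u2: "{n} \<union> J \<union> (K - J) \<union> (M - K) = {1..n}" using u JK by blast
  have ne: "M - K \<noteq> {}" using JK by blast
  have ad: "adm4 n L {n} J (K - J) (M - K)"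
    unfolding adm4_def using JK s1 s2 s3 s4 u2 ne nm by blast
  have e1: "(K - J) \<union> (M - K) = M - J" using JK by blast
  have e2: "J \<union> (K - J) = K" using JK by blast
  have i1: "incident (Pv n J) {n} J (K - J) (M - K)"
    unfolding incident_def cyc_eq_def pv prod.case e1 by simp
  have i2: "incident (Pv n K) {n} J (K - J) (M - K)"
    unfolding incident_def cyc_eq_def pv prod.case e2 by simp
  have d: "{n} \<noteq> K" "{n} \<noteq> J" "J \<noteq> K" "K \<noteq> J" "K \<noteq> {n}" "J \<noteq> {n}" using JK nm by blast+
  have ne1: "\<not> cyc_eq (Pv n J) (Pv n K)" "\<not> cyc_eq (Pv n K) (Pv n J)"
    unfolding cyc_eq_def pv prod.case using d by simp_all
  show ?thesis unfolding gamma_adj_def using adm3_Pv[OF assms(1)] assms ad i1 i2 ne1 by blast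
qed

lemma adj_rot1:
  assumes "cyc_eq v u" "adm3 n L v" "gamma_adj n L u x"
  shows "gamma_adj n L v x"
proof -
  have s: "cyc_eq u v" using assms(1) cyc_eq_sym by blast
  have "\<not> cyc_eq v x" using assms(3) cyc_eq_trans[OF s] unfolding gamma_adj_def by blast
  moreover have "\<And>A B C D. incident u A B C D \<Longrightarrow> incident v A B C D"
    unfolding incident_def using cyc_eq_trans[OF assms(1)] by blast
  ultimately show ?thesis using assms(2,3) unfolding gamma_adj_def by blast
qed

lemma adj_rot2:
  assumes "cyc_eq w u" "adm3 n L w" "gamma_adj n L x u"
  shows "gamma_adj n L x w"
proof -
  have "\<not> cyc_eq x w"
    using assms(3) cyc_eq_trans[OF _ assms(1)] unfolding gamma_adj_def by blast
  moreover have "\<And>A B C D. incident u A B C D \<Longrightarrow> incident w A B C D"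
    unfolding incident_def using cyc_eq_trans[OF assms(1)] by blast
  ultimately show ?thesis using assms(2,3) unfolding gamma_adj_def by blast
qed

lemma path0: "adm3 n L x \<Longrightarrow> gamma_path_le n L k x x"
  unfolding gamma_path_le_def by (intro exI[of _ "[x]"]) simp

lemma path_snoc:
  assumes "gamma_path_le n L k x y" "gamma_adj n L y z"
  shows "gamma_path_le n L (Suc k) x z"
proof -
  obtain ps where ps: "ps \<noteq> []" "hd ps = x" "last ps = y" "length ps \<le> k + 1"
    "\<forall>p\<in>set ps. adm3 n L p" "\<forall>i. i + 1 < length ps \<longrightarrow> gamma_adj n L (ps ! i) (ps ! (i + 1))"
    using assms(1) unfolding gamma_path_le_def by blast
  have z: "adm3 n L z" using assms(2) unfolding gamma_adj_def by blast
  have A: "\<forall>i. i + 1 < length (ps @ [z]) \<longrightarrow> gamma_adj n L ((ps@[z]) ! i) ((ps@[z]) ! (i + 1))"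
  proof (intro allI impI)
    fix i assume i: "i + 1 < length (ps @ [z])"
    show "gamma_adj n L ((ps@[z]) ! i) ((ps@[z]) ! (i + 1))"
    proof (cases "i + 1 < length ps")
      case True then show ?thesis using ps(6) by (simp add: nth_append)
    next
      case False
      then have "i + 1 = length ps" using i by simp
      then have "ps ! i = y" using ps(1,3) by (metis last_conv_nth add_diff_cancel_right')
      then show ?thesis using \<open>i + 1 = length ps\<close> assms(2) by (simp add: nth_append)
    qed
  qed
  show ?thesis unfolding gamma_path_le_def
  proof (intro exI[of _ "ps @ [z]"] conjI)
    show "ps @ [z] \<noteq> []" by simp
    show "hd (ps @ [z]) = x" using ps(1,2) by simp
    show "last (ps @ [z]) = z" by simp
    show "length (ps @ [z]) \<le> Suc k + 1" using ps(4) by simp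
    show "\<forall>p\<in>set (ps @ [z]). adm3 n L p" using ps(5) z by simp
    show "\<forall>i. i + 1 < length (ps @ [z]) \<longrightarrow> gamma_adj n L ((ps@[z]) ! i) ((ps@[z]) ! (i + 1))" by (rule A)
  qed
qed

lemma path_mono:
  assumes "gamma_path_le n L k x y" "k \<le> k'"
  shows "gamma_path_le n L k' x y"
proof -
  obtain ps where ps: "ps \<noteq> []" "hd ps = x" "last ps = y" "length ps \<le> k + 1"
    "\<forall>p\<in>set ps. adm3 n L p" "\<forall>i. i + 1 < length ps \<longrightarrow> gamma_adj n L (ps ! i) (ps ! (i + 1))"
    using assms(1) unfolding gamma_path_le_def by blast
  have "length ps \<le> k' + 1" using ps(4) assms(2) by linarith
  then show ?thesis unfolding gamma_path_le_def using ps(1,2,3,5,6) by blast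
qed

lemma fcase:
  assumes "J1 \<subseteq> M" "J2 \<subseteq> M" "J1 \<noteq> {}" "J1 \<inter> J2 = {}" "J1 \<union> J2 = M"
    "y \<in> J2" "y' \<in> J2" "y \<noteq> y'"
  shows "M - {y} \<subseteq> M \<and> M - {y} \<noteq> {} \<and> M - {y} \<noteq> M \<and> J1 \<subset> M - {y} \<and>
    {y'} \<subset> M - {y} \<and> {y'} \<subseteq> M \<and> {y'} \<noteq> {} \<and> {y'} \<noteq> M \<and> {y'} \<subset> J2"
proof -
  obtain x where x: "x \<in> J1" using assms(3) by blast
  have "x \<noteq> y" "x \<noteq> y'" "y \<in> M" "y' \<in> M" "x \<in> M" using x assms by blast+
  then show ?thesis using assms x by auto
qed

theorem mainTheorem4:
  fixes n :: nat and L :: "nat \<Rightarrow> real"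
    and v w :: "nat set \<times> nat set \<times> nat set"
  assumes "n \<ge> 4"
    and "is_bow n L"
    and "adm3 n L v" and "adm3 n L w"
  shows "gamma_path_le n L 3 v w"
proof -
  define M where "M = {1..n-1}"
  have gd: "\<And>J. good n J \<longleftrightarrow> J \<subseteq> M \<and> J \<noteq> {} \<and> J \<noteq> M" unfolding good_def M_def by (rule refl)
  obtain J1 where g1: "good n J1" and c1: "cyc_eq v (Pv n J1)" using canon assms by blast
  obtain J2 where g2: "good n J2" and c2: "cyc_eq w (Pv n J2)" using canon assms by blast
  have adjP: "\<And>J K. good n J \<Longrightarrow> good n K \<Longrightarrow> J \<subset> K \<or> K \<subset> J \<Longrightarrow> gamma_adj n L (Pv n J) (Pv n K)"
    using adj_sub[OF assms(2)] by blast
  have vadj: "\<And>K. good n K \<Longrightarrow> J1 \<subset> K \<or> K \<subset> J1 \<Longrightarrow> gamma_adj n L v (Pv n K)"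
    by (rule adj_rot1[OF c1 assms(3)], rule adjP[OF g1]) auto
  have wadj: "\<And>K. good n K \<Longrightarrow> J2 \<subset> K \<or> K \<subset> J2 \<Longrightarrow> gamma_adj n L (Pv n K) w"
    by (rule adj_rot2[OF c2 assms(4)], rule adjP[OF _ g2]) auto
  have p1: "\<And>y. gamma_adj n L v y \<Longrightarrow> gamma_path_le n L 3 v y"
  proof -
    fix y assume "gamma_adj n L v y"
    then have "gamma_path_le n L (Suc 0) v y" by (rule path_snoc[OF path0[OF assms(3)]])
    then show "gamma_path_le n L 3 v y" by (rule path_mono) simp
  qed
  have p2: "\<And>y z. gamma_adj n L v y \<Longrightarrow> gamma_adj n L y z \<Longrightarrow> gamma_path_le n L 3 v z"
  proof -
    fix y z assume a1: "gamma_adj n L v y" and a2: "gamma_adj n L y z"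
    have "gamma_path_le n L (Suc (Suc 0)) v z"
      by (rule path_snoc[OF path_snoc[OF path0[OF assms(3)] a1] a2])
    then show "gamma_path_le n L 3 v z" by (rule path_mono) simp
  qed
  have p3: "\<And>y z u. gamma_adj n L v y \<Longrightarrow> gamma_adj n L y z \<Longrightarrow> gamma_adj n L z u \<Longrightarrow> gamma_path_le n L 3 v u"
  proof -
    fix y z u assume a1: "gamma_adj n L v y" and a2: "gamma_adj n L y z" and a3: "gamma_adj n L z u"
    have "gamma_path_le n L (Suc (Suc (Suc 0))) v u"
      by (rule path_snoc[OF path_snoc[OF path_snoc[OF path0[OF assms(3)] a1] a2] a3])
    then show "gamma_path_le n L 3 v u" by (simp add: numeral_3_eq_3)
  qed
  have cm: "card M \<ge> 3" using assms(1) unfolding M_def by simp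
  have fM: "finite M" unfolding M_def by simp
  have G1: "J1 \<subseteq> M" "J1 \<noteq> {}" "J1 \<noteq> M" using g1 gd by blast+
  have G2: "J2 \<subseteq> M" "J2 \<noteq> {}" "J2 \<noteq> M" using g2 gd by blast+
  have two: "\<And>J. J \<noteq> {} \<Longrightarrow> (\<exists>a b. a \<in> J \<and> b \<in> J \<and> a \<noteq> b) \<or> (\<exists>x. J = {x})"
    by blast
  show ?thesis
  proof (cases "v = w")
    case True then show ?thesis using path0[OF assms(3)] by simp
  next
    case vw: False
    show ?thesis
    proof (cases "J1 = J2")
      case True
      obtain K where K: "good n K" "J1 \<subset> K \<or> K \<subset> J1"
      proof (cases "\<exists>a b. a \<in> J1 \<and> b \<in> J1 \<and> a \<noteq> b")
        case True
        then obtain a b where ab: "a \<in> J1" "b \<in> J1" "a \<noteq> b" by blast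
        have "good n {a}" "{a} \<subset> J1" unfolding gd using G1 ab by blast+
        then show ?thesis using that by blast
      next
        case False
        then obtain x where x: "J1 = {x}" using two[OF G1(2)] by blast
        obtain y where y: "y \<in> M" "y \<noteq> x"
        proof -
          have "M \<noteq> {x}"
          proof
            assume "M = {x}" then have "card M = 1" by simp
            then show False using cm by simp
          qed
          then show ?thesis using that G1 x by blast
        qed
        have "card {x,y} = 2" using y by simp
        then have "{x,y} \<noteq> M" using cm by auto
        then have "good n {x,y}" "J1 \<subset> {x,y}" unfolding gd using G1 x y by blast+
        then show ?thesis using that by blast
      qed
      show ?thesis by (rule p2[OF vadj[OF K] wadj[OF K(1)]]) (use K True in blast)
    next
      case ne: False
      show ?thesis
      proof (cases "J1 \<subset> J2 \<or> J2 \<subset> J1")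
        case True
        have "gamma_adj n L v (Pv n J2)" by (rule vadj[OF g2 True])
        then have "gamma_adj n L v w" by (rule adj_rot2[OF c2 assms(4)])
        then show ?thesis by (rule p1)
      next
        case inc: False
        show ?thesis
        proof (cases "J1 \<inter> J2 = {}")
          case False
          then obtain x where x: "x \<in> J1" "x \<in> J2" by blast
          have X: "good n {x}" "{x} \<subset> J1" "{x} \<subset> J2" unfolding gd using x G1 G2 inc ne by blast+
          show ?thesis by (rule p2[OF vadj[OF X(1)] wadj[OF X(1)]]) (use X in blast)+
        next
          case dis: True
          show ?thesis
          proof (cases "J1 \<union> J2 = M")
            case False
            have X: "good n (J1 \<union> J2)" "J1 \<subset> J1 \<union> J2" "J2 \<subset> J1 \<union> J2"
              unfolding gd using False G1 G2 dis by blast+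
            show ?thesis by (rule p2[OF vadj[OF X(1)] wadj[OF X(1)]]) (use X in blast)+
          next
            case un: True
            have "(\<exists>a b. a \<in> J2 \<and> b \<in> J2 \<and> a \<noteq> b) \<or> (\<exists>a b. a \<in> J1 \<and> b \<in> J1 \<and> a \<noteq> b)"
            proof (rule ccontr)
              assume "\<not> ?thesis"
              then obtain x y where "J1 = {x}" "J2 = {y}" using two[OF G1(2)] two[OF G2(2)] by blast
              then have "M \<subseteq> {x,y}" using un by blast
              then have "card M \<le> card {x,y}" by (meson card_mono finite.emptyI finite.insertI)
              also have "\<dots> \<le> 2" by (simp add: card_insert_le_m1)
              finally show False using cm by simp
            qed
            then show ?thesis
            proof
              assume "\<exists>a b. a \<in> J2 \<and> b \<in> J2 \<and> a \<noteq> b"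
              then obtain y y' where y: "y \<in> J2" "y' \<in> J2" "y \<noteq> y'" by blast
              have F: "M - {y} \<subseteq> M \<and> M - {y} \<noteq> {} \<and> M - {y} \<noteq> M \<and> J1 \<subset> M - {y} \<and>
    {y'} \<subset> M - {y} \<and> {y'} \<subseteq> M \<and> {y'} \<noteq> {} \<and> {y'} \<noteq> M \<and> {y'} \<subset> J2"
                by (rule fcase[OF G1(1) G2(1) G1(2) dis un y])
              have H: "good n (M - {y})" "good n {y'}" unfolding gd using F by blast+
              have e1: "gamma_adj n L v (Pv n (M - {y}))" using vadj[OF H(1)] F by blast
              have e2: "gamma_adj n L (Pv n (M - {y})) (Pv n {y'})" using adjP[OF H(1) H(2)] F by blast
              have e3: "gamma_adj n L (Pv n {y'}) w" using wadj[OF H(2)] F by blast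
              show ?thesis by (rule p3[OF e1 e2 e3])
            next
              assume "\<exists>a b. a \<in> J1 \<and> b \<in> J1 \<and> a \<noteq> b"
              then obtain y y' where y: "y \<in> J1" "y' \<in> J1" "y \<noteq> y'" by blast
              have dis': "J2 \<inter> J1 = {}" using dis by blast
              have un': "J2 \<union> J1 = M" using un by blast
              have F: "M - {y} \<subseteq> M \<and> M - {y} \<noteq> {} \<and> M - {y} \<noteq> M \<and> J2 \<subset> M - {y} \<and>
    {y'} \<subset> M - {y} \<and> {y'} \<subseteq> M \<and> {y'} \<noteq> {} \<and> {y'} \<noteq> M \<and> {y'} \<subset> J1"
                by (rule fcase[OF G2(1) G1(1) G2(2) dis' un' y])
              have H: "good n (M - {y})" "good n {y'}" unfolding gd using F by blast+
              have e1: "gamma_adj n L v (Pv n {y'})" using vadj[OF H(2)] F by blast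
              have e2: "gamma_adj n L (Pv n {y'}) (Pv n (M - {y}))" using adjP[OF H(2) H(1)] F by blast
              have e3: "gamma_adj n L (Pv n (M - {y})) w" using wadj[OF H(1)] F by blast
              show ?thesis by (rule p3[OF e1 e2 e3])
            qed
          qed
        qed
      qed
    qed
  qed
qed

end
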